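(* Let $N=pq$ with $p,q$ distinct primes. Let $b\in\mathbb{Z}$ and let $f=n_2X^2+n_1X+n_0\in\mathbb{Z}[X]$ be of degree $2$ with $f(b)=N$. If $\gcd(n_2b,N)=1$ and $\gcd(N,n_2b^2-n_0)=1$, then $\nu(f)=2p+2q-8$.
   Context: $Z_N=\{0,1,\dots,N-1\}$. For $g\in\mathbb{Z}[X]$, an element $x\in Z_N$ is called suitable for $g$ if $1<\gcd(g(x),N)<N$, and $\nu(g)$ denotes the number of $x\in Z_N$ suitable for $g$. *)

theory Defs
  imports "HOL-Computational_Algebra.Computational_Algebra"
begin

definition suitable :: "int \<Rightarrow> int poly \<Rightarrow> int \<Rightarrow> bool" where
  "suitable N g x \<longleftrightarrow> x \<in> {0..<N} \<and> 1 < gcd (poly g x) N \<and> gcd (poly g x) N < N"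

definition nu :: "int \<Rightarrow> int poly \<Rightarrow> nat" where
  "nu N g = card {x \<in> {0..<N}. suitable N g x}"

end

theory Submission
  imports Defs
begin

lemma dvd_mod_lin:
  fixes p a c x :: int
  shows "p dvd (a*x + c) \<longleftrightarrow> p dvd (a*(x mod p) + c)"
proof -
  have "a*x + c = (a*(x mod p) + c) + p*(a*(x div p))"
    by (metis (no_types, lifting) add.commute add.left_commute distrib_left mult.left_commute mult_div_mod_eq)
  thus ?thesis by (metis dvd_add_left_iff dvd_triv_left)
qed

lemma one_root:
  fixes p a c :: int
  assumes "prime p" "coprime a p"
  shows "card {y\<in>{0..<p}. p dvd (a*y + c)} = 1"
proof -
  obtain u v where uv: "u * a + v * p = gcd a p" using bezout_int by blast
  then have uv1: "u * a + v * p = 1" using assms(2) by simp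
  define y0 where "y0 = (-c*u) mod p"
  have pp: "p > 0" using assms(1) prime_gt_0_int by blast
  have h0: "p dvd (a*(-c*u) + c)"
  proof -
    have "a*u - 1 = p * (-v)" using uv1 by (simp add: algebra_simps)
    then have "p dvd (a*u - 1)" by (metis dvd_triv_left)
    then have "p dvd (-c)*(a*u-1)" by (rule dvd_mult)
    moreover have eq: "a*(-c*u) + c = (-c)*(a*u-1)" by (simp add: algebra_simps)
    ultimately show ?thesis by (simp only: eq)
  qed
  have hy0: "p dvd (a*y0 + c)" using h0 dvd_mod_lin y0_def by metis
  have "{y\<in>{0..<p}. p dvd (a*y + c)} = {y0}"
  proof (rule set_eqI, rule iffI)
    fix y assume "y \<in> {y\<in>{0..<p}. p dvd (a*y + c)}"
    then have y: "0 \<le> y" "y < p" "p dvd (a*y+c)" by auto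
    have "p dvd (a*y + c) - (a*y0 + c)" using y(3) hy0 by (rule dvd_diff)
    then have "p dvd a*(y - y0)" by (simp add: algebra_simps)
    then have "p dvd (y - y0)"
      using assms(2) by (metis coprime_commute coprime_dvd_mult_right_iff)
    moreover have "0 \<le> y0" "y0 < p" using pp y0_def by auto
    ultimately have "y = y0" using y
      by (metis mod_eq_dvd_iff mod_pos_pos_trivial)
    thus "y \<in> {y0}" by simp
  next
    fix y assume "y \<in> {y0}"
    thus "y \<in> {y\<in>{0..<p}. p dvd (a*y + c)}" using hy0 pp y0_def by auto
  qed
  thus ?thesis by simp
qed

lemma two_roots:
  fixes p b n0 n1 n2 N :: int
  assumes "prime p" "p dvd N" "N = n2*b^2 + n1*b + n0"
    and "coprime n2 p" "\<not> p dvd (n2*b^2 - n0)"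
  shows "card {y\<in>{0..<p}. p dvd (y - b) \<or> p dvd (n2*y + (n2*b + n1))} = 2"
proof -
  have e: "{y\<in>{0..<p}. p dvd (y - b) \<or> p dvd (n2*y + (n2*b + n1))}
     = {y\<in>{0..<p}. p dvd (1*y + (-b))} \<union> {y\<in>{0..<p}. p dvd (n2*y + (n2*b + n1))}"
    by auto
  have c1: "card {y\<in>{0..<p}. p dvd (1*y + (-b))} = 1" using one_root[of p 1 "-b"] assms(1) by simp
  have c2: "card {y\<in>{0..<p}. p dvd (n2*y + (n2*b + n1))} = 1" using one_root assms(1,4) by simp
  have d: "{y\<in>{0..<p}. p dvd (1*y + (-b))} \<inter> {y\<in>{0..<p}. p dvd (n2*y + (n2*b + n1))} = {}"
  proof (rule ccontr)
    assume "\<not> ?thesis"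
    then obtain y where y: "p dvd (y - b)" "p dvd (n2*y + (n2*b + n1))" by auto
    have "p dvd (n2*y + (n2*b + n1)) - n2*(y-b)" using y by (simp add: dvd_diff)
    then have "p dvd (2*n2*b + n1)" by (simp add: algebra_simps)
    then have "p dvd b*(2*n2*b + n1) - N" using assms(2) by (simp add: dvd_diff)
    moreover have "b*(2*n2*b + n1) - N = n2*b^2 - n0" using assms(3) by (simp add: algebra_simps power2_eq_square)
    ultimately show False using assms(5) by simp
  qed
  have f1: "finite {y\<in>{0..<p}. p dvd (1*y + (-b))}" by (rule finite_subset[of _ "{0..<p}"]) auto
  have f2: "finite {y\<in>{0..<p}. p dvd (n2*y + (n2*b + n1))}" by (rule finite_subset[of _ "{0..<p}"]) auto
  show ?thesis unfolding e card_Un_disjoint[OF f1 f2 d] c1 c2 by simp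
qed

lemma crt_bij:
  fixes p q :: int
  assumes "p > 0" "q > 0" "coprime p q"
  shows "bij_betw (\<lambda>x. (x mod p, x mod q)) {0..<p*q} ({0..<p}\<times>{0..<q})"
proof -
  let ?f = "\<lambda>x. (x mod p, x mod q)"
  have inj: "inj_on ?f {0..<p*q}"
  proof (rule inj_onI)
    fix x y assume xy: "x \<in> {0..<p*q}" "y \<in> {0..<p*q}" "?f x = ?f y"
    have "p dvd (x - y)" "q dvd (x - y)" using xy(3) by (auto simp: mod_eq_dvd_iff)
    then have "p*q dvd (x - y)" using assms(3) by (simp add: divides_mult)
    then obtain k where k: "x - y = p*q*k" by auto
    have "k = 0"
    proof (rule ccontr)
      assume "k \<noteq> 0"
      then have "\<bar>p*q*k\<bar> \<ge> p*q" using assms by (simp add: abs_mult)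
      then show False using k xy(1,2) by auto
    qed
    thus "x = y" using k by simp
  qed
  have sub: "?f ` {0..<p*q} \<subseteq> {0..<p}\<times>{0..<q}" using assms by auto
  have "card (?f ` {0..<p*q}) = card ({0..<p}\<times>{0..<q})"
    using card_image[OF inj] assms by (simp add: card_cartesian_product nat_mult_distrib)
  then have "?f ` {0..<p*q} = {0..<p}\<times>{0..<q}"
    using sub by (intro card_subset_eq) auto
  thus ?thesis using inj by (simp add: bij_betw_def)
qed

lemma card_preimage:
  assumes "bij_betw f X Y" "T \<subseteq> Y"
  shows "card {x\<in>X. f x \<in> T} = card T"
proof -
  have i: "inj_on f X" using assms(1) by (rule bij_betw_imp_inj_on)
  have inj: "inj_on f {x\<in>X. f x \<in> T}" by (rule inj_on_subset[OF i]) blast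
  have Y: "f ` X = Y" using assms(1) by (rule bij_betw_imp_surj_on)
  have "f ` {x\<in>X. f x \<in> T} = T"
  proof
    show "f ` {x\<in>X. f x \<in> T} \<subseteq> T" by blast
    show "T \<subseteq> f ` {x\<in>X. f x \<in> T}"
    proof
      fix t assume t: "t \<in> T"
      then have "t \<in> f ` X" using assms(2) Y by blast
      then obtain x where "x \<in> X" "t = f x" by blast
      thus "t \<in> f ` {x\<in>X. f x \<in> T}" using t by blast
    qed
  qed
  thus ?thesis using card_image[OF inj] by simp
qed

lemma gcd_two_primes:
  fixes p q v :: int
  assumes "prime p" "prime q" "p \<noteq> q"
  shows "(1 < gcd v (p*q) \<and> gcd v (p*q) < p*q) \<longleftrightarrow> ((p dvd v) \<noteq> (q dvd v))"
proof -
  have pp: "p > 1" "q > 1" using assms(1,2) prime_gt_1_int by auto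
  have cop: "coprime p q" using assms(1,2,3) primes_coprime by blast
  let ?g = "gcd v (p*q)"
  have gpos: "?g > 0" using pp by simp
  have gle: "?g \<le> p*q" using gpos pp by (simp add: zdvd_imp_le)
  show ?thesis
  proof (cases "p dvd v"; cases "q dvd v")
    assume a: "p dvd v" "q dvd v"
    then have "p*q dvd v" using cop by (simp add: divides_mult)
    then have "?g = p*q" using pp by (simp add: gcd_proj2_if_dvd)
    thus ?thesis using a by simp
  next
    assume a: "\<not> p dvd v" "\<not> q dvd v"
    then have "coprime v p" "coprime v q" using assms prime_imp_coprime coprime_commute by metis+
    then have "coprime v (p*q)" by simp
    then have "?g = 1" by simp
    thus ?thesis using a by simp
  next
    assume a: "p dvd v" "\<not> q dvd v"
    have "p dvd ?g" using a by simp
    then have "p \<le> ?g" using gpos zdvd_imp_le by blast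
    moreover have "?g \<noteq> p*q" using a by (metis dvd_mult_right gcd_dvd1)
    ultimately have "1 < ?g \<and> ?g < p*q" using pp gle by linarith
    thus ?thesis using a by simp
  next
    assume a: "\<not> p dvd v" "q dvd v"
    have "q dvd ?g" using a by simp
    then have "q \<le> ?g" using gpos zdvd_imp_le by blast
    moreover have "?g \<noteq> p*q" using a by (metis dvd_mult_left gcd_dvd1)
    ultimately have "1 < ?g \<and> ?g < p*q" using pp gle by linarith
    thus ?thesis using a by simp
  qed
qed

theorem corollary2p12:
  fixes p q N b n0 n1 n2 :: int and f :: "int poly"
  assumes "prime p" and "prime q" and "p \<noteq> q" and "N = p * q"
    and "f = [:n0, n1, n2:]" and "degree f = 2"
    and "poly f b = N"
    and "gcd (n2 * b) N = 1" and "gcd N (n2 * b^2 - n0) = 1"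
  shows "int (nu N f) = 2 * p + 2 * q - 8"
proof -
  have pp: "p > 1" "q > 1" using assms(1,2) prime_gt_1_int by auto
  have cop: "coprime p q" using assms(1,2,3) primes_coprime by blast
  have Nv: "N = n2*b^2 + n1*b + n0" using assms(5,7) by (simp add: algebra_simps power2_eq_square)
  have fid: "poly f y = N + (y - b) * (n2*y + (n2*b + n1))" for y
    unfolding Nv assms(5) by (simp add: algebra_simps power2_eq_square)
  have cN: "coprime n2 N" using assms(8) by (metis coprime_iff_gcd_eq_1 coprime_mult_left_iff)
  have cNp: "coprime n2 p" "coprime n2 q" using cN assms(4) by auto
  have ndp0: "\<not> r dvd (n2*b^2 - n0)" if "prime r" "r dvd N" for r
  proof
    assume "r dvd (n2*b^2 - n0)"
    then have "r dvd gcd N (n2*b^2 - n0)" using that(2) by simp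
    then have "r dvd 1" using assms(9) by simp
    thus False using that(1) by (metis not_prime_unit)
  qed
  have ndp: "\<not> p dvd (n2*b^2 - n0)" "\<not> q dvd (n2*b^2 - n0)"
  proof -
    have "p dvd N" "q dvd N" using assms(4) by simp_all
    thus "\<not> p dvd (n2*b^2 - n0)" "\<not> q dvd (n2*b^2 - n0)"
      using ndp0[OF assms(1)] ndp0[OF assms(2)] by blast+
  qed
  define A where "A = {y\<in>{0..<p}. p dvd (y - b) \<or> p dvd (n2*y + (n2*b + n1))}"
  define B where "B = {y\<in>{0..<q}. q dvd (y - b) \<or> q dvd (n2*y + (n2*b + n1))}"
  have cA: "card A = 2" unfolding A_def
    using two_roots[OF assms(1) _ Nv cNp(1) ndp(1)] assms(4) by simp
  have cB: "card B = 2" unfolding B_def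
    using two_roots[OF assms(2) _ Nv cNp(2) ndp(2)] assms(4) by simp
  have divp: "r dvd poly f x \<longleftrightarrow> x mod r \<in> {y\<in>{0..<r}. r dvd (y - b) \<or> r dvd (n2*y + (n2*b + n1))}"
    if "prime r" "r dvd N" for r x
  proof -
    have rp: "r > 0" using that prime_gt_0_int by blast
    have "r dvd poly f x \<longleftrightarrow> r dvd (x - b) * (n2*x + (n2*b + n1))"
      using fid that(2) by (metis dvd_add_right_iff)
    also have "\<dots> \<longleftrightarrow> r dvd (x - b) \<or> r dvd (n2*x + (n2*b + n1))"
      using that(1) by (simp add: prime_dvd_mult_iff)
    also have "\<dots> \<longleftrightarrow> r dvd (1*(x mod r) + (-b)) \<or> r dvd (n2*(x mod r) + (n2*b + n1))"
      using dvd_mod_lin[of r 1 x "-b"] dvd_mod_lin[of r n2 x] by simp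
    finally show ?thesis using rp by simp
  qed
  define T where "T = (A \<times> ({0..<q} - B)) \<union> (({0..<p} - A) \<times> B)"
  have S: "{x\<in>{0..<N}. suitable N f x} = {x\<in>{0..<p*q}. (x mod p, x mod q) \<in> T}"
  proof -
    have "suitable N f x \<longleftrightarrow> x \<in> {0..<N} \<and> (x mod p, x mod q) \<in> T" for x
    proof -
      have "suitable N f x \<longleftrightarrow> x \<in> {0..<N} \<and> ((p dvd poly f x) \<noteq> (q dvd poly f x))"
      proof -
        have g: "(1 < gcd (poly f x) N \<and> gcd (poly f x) N < N) \<longleftrightarrow> ((p dvd poly f x) \<noteq> (q dvd poly f x))"
          unfolding assms(4) by (rule gcd_two_primes[OF assms(1,2,3)])
        show ?thesis unfolding suitable_def g by (rule refl)
      qed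
      also have "\<dots> \<longleftrightarrow> x \<in> {0..<N} \<and> ((x mod p \<in> A) \<noteq> (x mod q \<in> B))"
        using divp[OF assms(1)] divp[OF assms(2)] assms(4) A_def B_def by simp
      also have "\<dots> \<longleftrightarrow> x \<in> {0..<N} \<and> (x mod p, x mod q) \<in> T"
        unfolding T_def A_def B_def using pp by auto
      finally show ?thesis .
    qed
    thus ?thesis using assms(4) by auto
  qed
  have TY: "T \<subseteq> {0..<p}\<times>{0..<q}" unfolding T_def A_def B_def by auto
  have "nu N f = card T" unfolding nu_def S
    using card_preimage[OF crt_bij TY] pp cop by simp
  moreover have AB: "A \<subseteq> {0..<p}" "B \<subseteq> {0..<q}" unfolding A_def B_def by auto
  moreover have "finite A" "finite B" using AB finite_subset by blast+
  moreover have "card T = card (A \<times> ({0..<q} - B)) + card (({0..<p} - A) \<times> B)"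
    unfolding T_def using \<open>finite A\<close> \<open>finite B\<close> by (intro card_Un_disjoint) auto
  ultimately have "nu N f = 2 * (nat q - 2) + (nat p - 2) * 2"
    using cA cB by (simp add: card_cartesian_product card_Diff_subset)
  moreover have "nat q \<ge> 2" "nat p \<ge> 2" using pp by auto
  ultimately show ?thesis using pp by simp
qed

end
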